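(* For every sequence ${\mathbf s}$ in $\widehat{\mathcal S}$, the inclusion ${\mathcal X}_T({\mathbf s})\subset\bigoplus_{\sigma\in I({\mathbf s})}S_T$ becomes an isomorphism after applying $-\otimes_{S_T}Q_T$.
   Context: $R$ irreducible reduced finite root system (positive roots $R^+$, simple roots $\Pi$, highest root $\gamma$); $\widehat X=X\oplus\mathbb Z$ ($X$ weight lattice), $\delta=(0,-1)$, affine roots $\widehat R=\{\alpha+n\delta:\alpha\in R,n\in\mathbb Z\}$. $\widehat{\mathcal W}$ is generated by $s_{\alpha,n}(v,m)=(v-(\langle\alpha,v\rangle-mn)\alpha^\vee,m)$ and acts contragrediently on $\widehat X$; $\widehat{\mathcal S}=\{s_{\alpha,0}:\alpha\in\Pi\}\cup\{s_{\gamma,1}\}$ with attached simple affine roots $\alpha$ resp. $-\gamma+\delta$. $T$: commutative unital domain, $2$ not a zero divisor, all $\alpha\otimes1$ ($\alpha\in\widehat R$) nonzero in $\widehat X\otimes T$. $S_T$: symmetric algebra of $\widehat X\otimes T$, graded in even degrees. $Q_T=S_T[2^{-1}][\alpha^{-1}:\alpha\in\widehat R]$. For ${\mathbf s}=(s_1,\dots,s_l)$: $I({\mathbf s})$ = strictly increasing tuples in $\{1,\dots,l\}$ (including the empty one), $\operatorname{ev}(i_1,\dots,i_n)=s_{i_1}\cdots s_{i_n}$; ${\mathbf s}'=(s_1,\dots,s_{l-1})$, $I({\mathbf s})=I({\mathbf s}')\sqcup I({\mathbf s}')s_l$ (appending $l$); $\Delta(z)_\gamma=\Delta(z)_{\gamma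 s_l}=z_\gamma$; $c^\lambda$ multiplies the $\sigma$-component by $\operatorname{ev}(\sigma)(\lambda)\otimes1$; $\alpha_l$ the simple affine root of $s_l$. ${\mathcal X}_T(\emptyset)=S_T$, ${\mathcal X}_T({\mathbf s})=\Delta({\mathcal X}_T({\mathbf s}'))+c^{\alpha_l}(\Delta({\mathcal X}_T({\mathbf s}')))\subset\bigoplus_{\sigma\in I({\mathbf s})}S_T$. *)

theory Defs
  imports "HOL-Analysis.Analysis" "HOL-Library.Poly_Mapping"
begin

definition coroot_pair :: "'v::euclidean_space \<Rightarrow> 'v \<Rightarrow> real" where
  "coroot_pair w \<alpha> = 2 * (w \<bullet> \<alpha>) / (\<alpha> \<bullet> \<alpha>)"

definition root_refl :: "'v::euclidean_space \<Rightarrow> 'v \<Rightarrow> 'v" where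
  "root_refl \<alpha> w = w - coroot_pair w \<alpha> *\<^sub>R \<alpha>"

definition root_system :: "'v::euclidean_space set \<Rightarrow> bool" where
  "root_system R \<longleftrightarrow> finite R \<and> 0 \<notin> R \<and> span R = UNIV
     \<and> (\<forall>\<alpha>\<in>R. \<forall>\<beta>\<in>R. root_refl \<alpha> \<beta> \<in> R)
     \<and> (\<forall>\<alpha>\<in>R. \<forall>\<beta>\<in>R. coroot_pair \<beta> \<alpha> \<in> \<int>)"

definition reduced_rs :: "'v::euclidean_space set \<Rightarrow> bool" where
  "reduced_rs R \<longleftrightarrow> (\<forall>\<alpha>\<in>R. \<forall>c::real. c *\<^sub>R \<alpha> \<in> R \<longrightarrow> c = 1 \<or> c = -1)"

definition irreducible_rs :: "'v::euclidean_space set \<Rightarrow> bool" where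
  "irreducible_rs R \<longleftrightarrow> R \<noteq> {} \<and> \<not> (\<exists>A B. A \<noteq> {} \<and> B \<noteq> {} \<and> A \<union> B = R \<and> A \<inter> B = {}
        \<and> (\<forall>a\<in>A. \<forall>b\<in>B. a \<bullet> b = 0))"

definition nonneg_comb :: "'v::euclidean_space set \<Rightarrow> 'v \<Rightarrow> bool" where
  "nonneg_comb B x \<longleftrightarrow> (\<exists>c::'v \<Rightarrow> nat. x = (\<Sum>\<beta>\<in>B. real (c \<beta>) *\<^sub>R \<beta>))"

definition is_base :: "'v::euclidean_space set \<Rightarrow> 'v set \<Rightarrow> bool" where
  "is_base R B \<longleftrightarrow> B \<subseteq> R \<and> independent B \<and>
     (\<forall>\<alpha>\<in>R. nonneg_comb B \<alpha> \<or> nonneg_comb B (- \<alpha>))"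

definition pos_roots :: "'v::euclidean_space set \<Rightarrow> 'v set \<Rightarrow> 'v set" where
  "pos_roots R B = {\<alpha>\<in>R. nonneg_comb B \<alpha>}"

definition highest_root :: "'v::euclidean_space set \<Rightarrow> 'v set \<Rightarrow> 'v \<Rightarrow> bool" where
  "highest_root R B \<gamma> \<longleftrightarrow> \<gamma> \<in> R \<and> (\<forall>\<alpha>\<in>R. nonneg_comb B (\<gamma> - \<alpha>))"

text \<open>Elements of \<open>\<widehat>X\<close> are pairs (lambda, m) with lambda in the weight lattice X
  (a subset of 'v) and m an integer; delta = (0,-1).  On X the coroot pairing is
  integral, so we take the integer it equals.\<close>

definition icop :: "'v::euclidean_space \<Rightarrow> 'v \<Rightarrow> int" where
  "icop w \<alpha> = \<lfloor>coroot_pair w \<alpha>\<rfloor>"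

definition affine_roots :: "'v::euclidean_space set \<Rightarrow> ('v \<times> int) set" where
  "affine_roots R = {(\<alpha>, - n) | \<alpha> n. \<alpha> \<in> R}"   (* alpha + n delta = (alpha, -n) *)

definition aff_refl :: "'v::euclidean_space \<Rightarrow> int \<Rightarrow> 'v \<times> int \<Rightarrow> 'v \<times> int" where
  "aff_refl \<alpha> n x = (fst x - of_int (icop (fst x) \<alpha>) *\<^sub>R \<alpha>, snd x - n * icop (fst x) \<alpha>)"

text \<open>Elements of \<open>\<widehat>S\<close> are labelled by \<open>'v option\<close>: Some alpha (alpha simple) stands for
  \<open>s_{\<alpha>,0}\<close>, None stands for \<open>s_{\<gamma>,1}\<close>.\<close>
definition simple_labels :: "'v set \<Rightarrow> 'v option set" where
  "simple_labels B = Some ` B \<union> {None}"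

fun lab_refl :: "'v::euclidean_space \<Rightarrow> 'v option \<Rightarrow> 'v \<times> int \<Rightarrow> 'v \<times> int" where
  "lab_refl \<gamma> (Some \<alpha>) = aff_refl \<alpha> 0"
| "lab_refl \<gamma> None = aff_refl \<gamma> 1"

fun lab_root :: "'v::euclidean_space \<Rightarrow> 'v option \<Rightarrow> 'v \<times> int" where
  "lab_root \<gamma> (Some \<alpha>) = (\<alpha>, 0)"
| "lab_root \<gamma> None = (- \<gamma>, -1)"     (* -gamma + delta *)

text \<open>Via the canonical isomorphism \<open>\<widehat>X \<otimes> T \<cong> T^\<Pi> \<oplus> T\<close>,
  \<open>(\<lambda>,m)\<otimes>t \<mapsto> ((\<langle>\<lambda>,\<alpha>\<^sup>\<or>\<rangle> t)_{\<alpha>\<in>\<Pi>}, m t)\<close>, the symmetric algebra \<open>S_T\<close> is the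
  polynomial ring over T in variables indexed by \<open>'v option\<close> (Some alpha for alpha in Pi,
  None for the Z-summand).\<close>

type_synonym ('v, 'a) symalg = "('v option \<Rightarrow>\<^sub>0 nat) \<Rightarrow>\<^sub>0 'a"

definition pvar :: "'v option \<Rightarrow> ('v, 'a::comm_ring_1) symalg" where
  "pvar i = Poly_Mapping.single (Poly_Mapping.single i 1) 1"

definition pconst :: "'a::comm_ring_1 \<Rightarrow> ('v, 'a) symalg" where
  "pconst c = Poly_Mapping.single 0 c"

definition lin :: "'v::euclidean_space set \<Rightarrow> 'v \<times> int \<Rightarrow> ('v, 'a::comm_ring_1) symalg" where
  "lin B x = (\<Sum>\<beta>\<in>B. of_int (icop (fst x) \<beta>) * pvar (Some \<beta>)) + of_int (snd x) * pvar None"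

text \<open>Multiplicative set generated by 2 and the \<open>\<alpha>\<otimes>1\<close>, \<open>\<alpha>\<in>\<widehat>R\<close>; \<open>Q_T = U^{-1} S_T\<close>.\<close>
inductive_set denoms :: "'v::euclidean_space set \<Rightarrow> 'v set \<Rightarrow> ('v, 'a::comm_ring_1) symalg set"
  for R B where
  one: "1 \<in> denoms R B"
| two: "u \<in> denoms R B \<Longrightarrow> 2 * u \<in> denoms R B"
| root: "u \<in> denoms R B \<Longrightarrow> a \<in> affine_roots R \<Longrightarrow> lin B a * u \<in> denoms R B"

definition Iset :: "nat \<Rightarrow> nat list set" where
  "Iset l = {\<sigma>. sorted_wrt (<) \<sigma> \<and> set \<sigma> \<subseteq> {1..l}}"

definition ev :: "'v::euclidean_space \<Rightarrow> 'v option list \<Rightarrow> nat list \<Rightarrow> 'v \<times> int \<Rightarrow> 'v \<times> int" where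
  "ev \<gamma> s \<sigma> x = foldr (\<lambda>i y. lab_refl \<gamma> (s ! (i - 1)) y) \<sigma> x"

definition dirsum :: "nat \<Rightarrow> (nat list \<Rightarrow> ('v, 'a::comm_ring_1) symalg) set" where
  "dirsum l = {f. \<forall>\<sigma>. \<sigma> \<notin> Iset l \<longrightarrow> f \<sigma> = 0}"

text \<open>Delta from \<open>\<Oplus>_{I(s')}\<close> to \<open>\<Oplus>_{I(s)}\<close> where l = length s.\<close>
definition Delta :: "nat \<Rightarrow> (nat list \<Rightarrow> ('v, 'a::comm_ring_1) symalg) \<Rightarrow> nat list \<Rightarrow> ('v, 'a) symalg" where
  "Delta l z \<sigma> = (if \<sigma> \<in> Iset l then (if \<sigma> \<noteq> [] \<and> last \<sigma> = l then z (butlast \<sigma>) else z \<sigma>) else 0)"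

definition cmul :: "'v::euclidean_space set \<Rightarrow> 'v \<Rightarrow> 'v option list \<Rightarrow> 'v \<times> int
    \<Rightarrow> (nat list \<Rightarrow> ('v, 'a::comm_ring_1) symalg) \<Rightarrow> nat list \<Rightarrow> ('v, 'a) symalg" where
  "cmul B \<gamma> s w f \<sigma> = lin B (ev \<gamma> s \<sigma> w) * f \<sigma>"

fun Xrev :: "'v::euclidean_space set \<Rightarrow> 'v \<Rightarrow> 'v option list \<Rightarrow> (nat list \<Rightarrow> ('v, 'a::comm_ring_1) symalg) set" where
  "Xrev B \<gamma> [] = {f. \<forall>\<sigma>. \<sigma> \<noteq> [] \<longrightarrow> f \<sigma> = 0}"
| "Xrev B \<gamma> (t # rs) =
     (let s = rev (t # rs); l = length s in
      {(\<lambda>\<sigma>. Delta l z \<sigma> + cmul B \<gamma> s (lab_root \<gamma> t) (Delta l z') \<sigma>) | z z'.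
          z \<in> Xrev B \<gamma> rs \<and> z' \<in> Xrev B \<gamma> rs})"

definition Xmod :: "'v::euclidean_space set \<Rightarrow> 'v \<Rightarrow> 'v option list \<Rightarrow> (nat list \<Rightarrow> ('v, 'a::comm_ring_1) symalg) set" where
  "Xmod B \<gamma> s = Xrev B \<gamma> (rev s)"

text \<open>The inclusion \<open>M \<subseteq> \<Oplus>_{\<sigma>\<in>I} S_T\<close> becomes an isomorphism after \<open>- \<otimes>_{S_T} Q_T\<close>,
  where \<open>Q_T = U^{-1}S_T\<close>, so \<open>M \<otimes>_{S_T} Q_T = U^{-1}M\<close>.  Fractions m/u (m in M) and
  f/v (f in the direct sum) agree iff \<open>t(vm - uf) = 0\<close> for some t in U.
  Injectivity of \<open>U^{-1}M \<rightarrow> U^{-1}(\<Oplus> S_T)\<close> holds by exactness of localization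
  (it is literally the identity on fraction representatives), so the content is surjectivity:\<close>
definition loc_iso :: "('b::comm_ring_1) set \<Rightarrow> ('i \<Rightarrow> 'b) set \<Rightarrow> ('i \<Rightarrow> 'b) set \<Rightarrow> bool" where
  "loc_iso U M D \<longleftrightarrow> M \<subseteq> D \<and>
     (\<forall>f\<in>D. \<forall>v\<in>U. \<exists>m\<in>M. \<exists>u\<in>U. \<exists>t\<in>U. \<forall>\<sigma>. t * (v * m \<sigma> - u * f \<sigma>) = 0)"

end

theory Submission
  imports Defs
begin

definition negp :: "'v::euclidean_space \<times> int \<Rightarrow> 'v \<times> int" where
  "negp x = (- fst x, - snd x)"

lemma cp_neg: "coroot_pair (- w) a = - coroot_pair w a"
  by (simp add: coroot_pair_def)

lemma icop_neg: "coroot_pair w a \<in> \<int> \<Longrightarrow> icop (- w) a = - icop w a"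
  unfolding icop_def cp_neg by (auto elim!: Ints_cases)

lemma of_int_icop: "coroot_pair w a \<in> \<int> \<Longrightarrow> (of_int (icop w a) :: real) = coroot_pair w a"
  unfolding icop_def by (auto elim!: Ints_cases)

lemma cp_self: "(a::'v::euclidean_space) \<noteq> 0 \<Longrightarrow> coroot_pair a a = 2"
  by (simp add: coroot_pair_def)

lemma rs_int: "root_system R \<Longrightarrow> a \<in> R \<Longrightarrow> b \<in> R \<Longrightarrow> coroot_pair b a \<in> \<int>"
  by (simp add: root_system_def)

lemma rs_refl: "root_system R \<Longrightarrow> a \<in> R \<Longrightarrow> b \<in> R \<Longrightarrow> root_refl a b \<in> R"
  by (simp add: root_system_def)

lemma rs_nz: "root_system R \<Longrightarrow> a \<in> R \<Longrightarrow> a \<noteq> 0"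
  by (auto simp: root_system_def)

lemma rs_neg: "root_system R \<Longrightarrow> a \<in> R \<Longrightarrow> - a \<in> R"
proof -
  assume r: "root_system R" and a: "a \<in> R"
  have "root_refl a a = - a"
    using rs_nz[OF r a] by (simp add: root_refl_def cp_self algebra_simps scaleR_2)
  with rs_refl[OF r a a] show ?thesis by simp
qed

lemma aff_refl_R:
  assumes r: "root_system R" and a: "a \<in> R" and x: "fst x \<in> R"
  shows "fst (aff_refl a n x) \<in> R"
proof -
  have "fst (aff_refl a n x) = root_refl a (fst x)"
    using of_int_icop[OF rs_int[OF r a x]] by (simp add: aff_refl_def root_refl_def)
  with rs_refl[OF r a x] show ?thesis by simp
qed

lemma aff_refl_neg:
  assumes r: "root_system R" and a: "a \<in> R" and x: "fst x \<in> R"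
  shows "aff_refl a n (negp x) = negp (aff_refl a n x)"
  using icop_neg[OF rs_int[OF r a x]]
  by (simp add: aff_refl_def negp_def algebra_simps)

lemma lab_refl_cases:
  assumes "lb \<in> simple_labels B" "B \<subseteq> R" "\<gamma> \<in> R"
  shows "\<exists>a n. a \<in> R \<and> lab_refl \<gamma> lb = aff_refl a n"
  using assms by (cases lb) (auto simp: simple_labels_def)

lemma lab_refl_R:
  assumes r: "root_system R" "lb \<in> simple_labels B" "B \<subseteq> R" "\<gamma> \<in> R" "fst x \<in> R"
  shows "fst (lab_refl \<gamma> lb x) \<in> R"
  using lab_refl_cases[OF assms(2-4)] aff_refl_R[OF r(1) _ r(5)] by auto

lemma lab_refl_neg:
  assumes r: "root_system R" "lb \<in> simple_labels B" "B \<subseteq> R" "\<gamma> \<in> R" "fst x \<in> R"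
  shows "lab_refl \<gamma> lb (negp x) = negp (lab_refl \<gamma> lb x)"
  using lab_refl_cases[OF assms(2-4)] aff_refl_neg[OF r(1) _ r(5)] by auto

lemma ev_Nil: "ev \<gamma> s [] x = x" by (simp add: ev_def)
lemma ev_Cons: "ev \<gamma> s (i # \<tau>) x = lab_refl \<gamma> (s ! (i - 1)) (ev \<gamma> s \<tau> x)"
  by (simp add: ev_def)
lemma ev_snoc: "ev \<gamma> s (\<tau> @ [i]) x = ev \<gamma> s \<tau> (lab_refl \<gamma> (s ! (i - 1)) x)"
  by (simp add: ev_def)

lemma ev_R_neg:
  assumes r: "root_system R" "B \<subseteq> R" "\<gamma> \<in> R"
    and v: "\<forall>i\<in>set \<tau>. s ! (i - 1) \<in> simple_labels B" and x: "fst x \<in> R"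
  shows "fst (ev \<gamma> s \<tau> x) \<in> R \<and> ev \<gamma> s \<tau> (negp x) = negp (ev \<gamma> s \<tau> x)"
  using v
proof (induction \<tau>)
  case Nil then show ?case using x by (simp add: ev_Nil)
next
  case (Cons i \<tau>)
  then have IH: "fst (ev \<gamma> s \<tau> x) \<in> R" "ev \<gamma> s \<tau> (negp x) = negp (ev \<gamma> s \<tau> x)"
    and l: "s ! (i - 1) \<in> simple_labels B" by auto
  show ?case
    using lab_refl_R[OF r(1) l r(2,3) IH(1)] lab_refl_neg[OF r(1) l r(2,3) IH(1)] IH(2)
    by (simp add: ev_Cons)
qed

lemma lin_neg:
  assumes r: "root_system R" "B \<subseteq> R" and x: "fst x \<in> R"
  shows "(lin B (negp x) :: ('v::euclidean_space, 'a::comm_ring_1) symalg) = - lin B x"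
proof -
  have "\<And>b. b \<in> B \<Longrightarrow> icop (- fst x) b = - icop (fst x) b"
    using icop_neg rs_int r x by blast
  then have "(\<Sum>\<beta>\<in>B. of_int (icop (- fst x) \<beta>) * (pvar (Some \<beta>) :: ('v, 'a) symalg))
     = (\<Sum>\<beta>\<in>B. - (of_int (icop (fst x) \<beta>) * pvar (Some \<beta>)))"
    by (intro sum.cong) auto
  then show ?thesis by (simp add: lin_def negp_def sum_negf)
qed

lemma lab_root_R:
  assumes r: "root_system R" "lb \<in> simple_labels B" "B \<subseteq> R" "\<gamma> \<in> R"
  shows "fst (lab_root \<gamma> lb) \<in> R"
  using assms rs_neg[OF r(1) r(4)] by (cases lb) (auto simp: simple_labels_def)

lemma lab_root_refl:
  assumes r: "root_system R" "lb \<in> simple_labels B" "B \<subseteq> R" "\<gamma> \<in> R"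
  shows "lab_refl \<gamma> lb (lab_root \<gamma> lb) = negp (lab_root \<gamma> lb)"
proof (cases lb)
  case None
  have "icop (- \<gamma>) \<gamma> = -2"
    using icop_neg[OF rs_int[OF r(1) r(4) r(4)]] cp_self[OF rs_nz[OF r(1) r(4)]]
    by (simp add: icop_def)
  then show ?thesis using None by (simp add: aff_refl_def negp_def scaleR_2)
next
  case (Some a)
  with r have a: "a \<in> R" by (auto simp: simple_labels_def)
  have "icop a a = 2" using cp_self[OF rs_nz[OF r(1) a]] by (simp add: icop_def)
  then show ?thesis using Some by (simp add: aff_refl_def negp_def algebra_simps scaleR_2)
qed

lemma affine_roots_iff: "x \<in> affine_roots R \<longleftrightarrow> fst x \<in> R"
proof
  assume "fst x \<in> R"
  then show "x \<in> affine_roots R" unfolding affine_roots_def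
    by (intro CollectI exI[of _ "fst x"] exI[of _ "- snd x"]) auto
qed (auto simp: affine_roots_def)

lemma denoms_mult: "u \<in> denoms R B \<Longrightarrow> v \<in> denoms R B \<Longrightarrow> u * v \<in> denoms R B"
  by (induction u rule: denoms.induct) (auto simp: mult.assoc intro: denoms.intros)

lemma denoms_prod:
  assumes "finite A" "\<forall>\<tau>\<in>A. fst (h \<tau>) \<in> R"
  shows "(\<Prod>\<tau>\<in>A. lin B (h \<tau>)) \<in> denoms R B"
  using assms
proof (induction A rule: finite_induct)
  case empty then show ?case by (simp add: denoms.one)
next
  case (insert x F)
  then show ?case using denoms.root[of "\<Prod>\<tau>\<in>F. lin B (h \<tau>)" R B "h x"]
    by (simp add: affine_roots_iff)
qed

lemma Iset_0: "Iset 0 = {[]}"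
  by (auto simp: Iset_def)

lemma Iset_mono: "\<sigma> \<in> Iset n \<Longrightarrow> \<sigma> \<in> Iset (Suc n)"
  by (auto simp: Iset_def)

lemma Iset_snoc: "\<tau> \<in> Iset n \<Longrightarrow> \<tau> @ [Suc n] \<in> Iset (Suc n)"
  by (auto simp: Iset_def sorted_wrt_append)

lemma Iset_not_last: "\<tau> \<in> Iset n \<Longrightarrow> \<not> (\<tau> \<noteq> [] \<and> last \<tau> = Suc n)"
  by (auto simp: Iset_def) (metis atLeastAtMost_iff last_in_set not_less_eq_eq subsetD order_refl)

lemma Iset_Suc_cases:
  assumes "\<sigma> \<in> Iset (Suc n)"
  shows "\<sigma> \<in> Iset n \<or> (\<exists>\<tau>\<in>Iset n. \<sigma> = \<tau> @ [Suc n])"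
proof (cases \<sigma> rule: rev_exhaust)
  case Nil then show ?thesis by (simp add: Iset_def)
next
  case (snoc \<tau> x)
  with assms have s: "sorted_wrt (<) \<tau>" "\<forall>y\<in>set \<tau>. y < x" "x \<le> Suc n" "1 \<le> x"
    "set \<tau> \<subseteq> {1..Suc n}"
    by (auto simp: Iset_def sorted_wrt_append)
  show ?thesis
  proof (cases "x = Suc n")
    case True
    then have "\<tau> \<in> Iset n" using s by (auto simp: Iset_def subset_iff less_Suc_eq_le)
    then show ?thesis using snoc True by auto
  next
    case False
    then have "\<sigma> \<in> Iset n" using s snoc assms by (fastforce simp: Iset_def)
    then show ?thesis by auto
  qed
qed

lemma Iset_finite: "finite (Iset n)"
proof -
  have "Iset n \<subseteq> {xs. set xs \<subseteq> {1..n} \<and> length xs \<le> n}"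
  proof
    fix xs assume "xs \<in> Iset n"
    then have d: "distinct xs" and st: "set xs \<subseteq> {1..n}"
      by (auto simp: Iset_def strict_sorted_iff)
    have "length xs = card (set xs)" using distinct_card[OF d] by simp
    also have "\<dots> \<le> n" using card_mono[OF _ st] by simp
    finally show "xs \<in> {xs. set xs \<subseteq> {1..n} \<and> length xs \<le> n}" using st by simp
  qed
  moreover have "finite {xs. set xs \<subseteq> {1..n} \<and> length xs \<le> n}"
    by (rule finite_lists_length_le) simp
  ultimately show ?thesis by (rule finite_subset)
qed

lemma Delta_scale: "Delta l (\<lambda>\<sigma>. c * z \<sigma>) \<sigma> = c * Delta l z \<sigma>"
  by (simp add: Delta_def)

lemma Xrev_scale:
  "h \<in> Xrev B \<gamma> rs \<Longrightarrow> (\<lambda>\<sigma>. c * h \<sigma>) \<in> Xrev B \<gamma> rs"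
proof (induction rs arbitrary: h)
  case Nil then show ?case by simp
next
  case (Cons t rs)
  from Cons.prems obtain z z' where z: "z \<in> Xrev B \<gamma> rs" "z' \<in> Xrev B \<gamma> rs"
    and h: "h = (\<lambda>\<sigma>. Delta (length (rev (t # rs))) z \<sigma>
        + cmul B \<gamma> (rev (t # rs)) (lab_root \<gamma> t) (Delta (length (rev (t # rs))) z') \<sigma>)"
    by (auto simp: Let_def)
  have "(\<lambda>\<sigma>. c * h \<sigma>) = (\<lambda>\<sigma>. Delta (length (rev (t # rs))) (\<lambda>\<sigma>. c * z \<sigma>) \<sigma>
        + cmul B \<gamma> (rev (t # rs)) (lab_root \<gamma> t) (Delta (length (rev (t # rs))) (\<lambda>\<sigma>. c * z' \<sigma>)) \<sigma>)"
    by (simp add: h Delta_scale cmul_def algebra_simps)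
  then show ?case using Cons.IH[OF z(1)] Cons.IH[OF z(2)]
    by (simp only: Xrev.simps Let_def) blast
qed

lemma Xrev_sub: "Xrev B \<gamma> rs \<subseteq> dirsum (length rs)"
proof (cases rs)
  case Nil then show ?thesis by (auto simp: dirsum_def Iset_0)
next
  case (Cons t rs')
  show ?thesis
    unfolding Cons by (auto simp: Let_def dirsum_def Delta_def cmul_def)
qed

lemma alg1: "u2 * (u1 * ((x + y) * (a * q))) + a * (u1 * (u2 * ((x - y) * q)))
   = u1 * u2 * (2 * (a * q)) * (x :: 'b::comm_ring_1)"
  by (simp add: algebra_simps mult_2)

lemma alg2: "u2 * (u1 * ((x + y) * (a * q))) + (- a) * (u1 * (u2 * ((x - y) * q)))
   = u1 * u2 * (2 * (a * q)) * (y :: 'b::comm_ring_1)"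
  by (simp add: algebra_simps mult_2)

lemma main:
  assumes r: "root_system R" "B \<subseteq> R" "\<gamma> \<in> R"
  shows "set rs \<subseteq> simple_labels B \<Longrightarrow> \<forall>f \<in> dirsum (length rs).
     \<exists>u \<in> (denoms R B :: ('v::euclidean_space, 'a::comm_ring_1) symalg set).
       (\<lambda>\<sigma>. u * f \<sigma>) \<in> Xrev B \<gamma> rs"
proof (induction rs)
  case Nil
  show ?case
  proof
    fix f :: "nat list \<Rightarrow> ('v, 'a) symalg" assume "f \<in> dirsum (length [])"
    then have "(\<lambda>\<sigma>. 1 * f \<sigma>) \<in> Xrev B \<gamma> []" by (auto simp: dirsum_def Iset_0)
    then show "\<exists>u \<in> denoms R B. (\<lambda>\<sigma>. u * f \<sigma>) \<in> Xrev B \<gamma> []" using denoms.one by blast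
  qed
next
  case (Cons t rs)
  have lab: "set rs \<subseteq> simple_labels B" "t \<in> simple_labels B" using Cons.prems by auto
  note IH = Cons.IH[OF lab(1)]
  define l where "l = Suc (length rs)"
  define s where "s = rev rs @ [t]"
  define I where "I = Iset (length rs)"
  have sl: "s ! (l - Suc 0) = t" by (simp add: s_def l_def nth_append)
  have sv: "\<forall>i\<in>set \<tau>. s ! (i - 1) \<in> simple_labels B" if "\<tau> \<in> I" for \<tau>
  proof
    fix i assume "i \<in> set \<tau>"
    with that have "1 \<le> i" "i \<le> length rs" by (auto simp: I_def Iset_def)
    then have "s ! (i - 1) \<in> set s" unfolding s_def by (intro nth_mem) simp
    then show "s ! (i - 1) \<in> simple_labels B" using lab by (auto simp: s_def)
  qed
  define a :: "nat list \<Rightarrow> ('v, 'a) symalg"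
    where "a \<tau> = lin B (ev \<gamma> s \<tau> (lab_root \<gamma> t))" for \<tau>
  have rt: "fst (lab_root \<gamma> t) \<in> R" using lab_root_R[OF r(1) lab(2) r(2,3)] .
  have aR: "fst (ev \<gamma> s \<tau> (lab_root \<gamma> t)) \<in> R" if "\<tau> \<in> I" for \<tau>
    using ev_R_neg[OF r sv[OF that] rt] by blast
  have aneg: "lin B (ev \<gamma> s (\<tau> @ [l]) (lab_root \<gamma> t)) = - a \<tau>" if "\<tau> \<in> I" for \<tau>
  proof -
    have "ev \<gamma> s (\<tau> @ [l]) (lab_root \<gamma> t) = ev \<gamma> s \<tau> (negp (lab_root \<gamma> t))"
      by (simp add: ev_snoc sl lab_root_refl[OF r(1) lab(2) r(2,3)])
    also have "\<dots> = negp (ev \<gamma> s \<tau> (lab_root \<gamma> t))"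
      using ev_R_neg[OF r sv[OF that] rt] by blast
    finally show ?thesis using lin_neg[OF r(1,2) aR[OF that]] by (simp add: a_def)
  qed
  have finI: "finite I" by (simp add: I_def Iset_finite)
  define P where "P = (\<Prod>\<tau>\<in>I. a \<tau>)"
  have Prem: "P = a \<sigma> * (\<Prod>\<tau>\<in>I - {\<sigma>}. a \<tau>)" if "\<sigma> \<in> I" for \<sigma>
    unfolding P_def using prod.remove[OF finI that] .
  have PU: "P \<in> denoms R B"
  proof -
    have "\<forall>\<tau>\<in>I. fst (ev \<gamma> s \<tau> (lab_root \<gamma> t)) \<in> R" using aR by blast
    from denoms_prod[OF finI this, of B] show ?thesis by (simp add: P_def a_def)
  qed
  show ?case
  proof
    fix f :: "nat list \<Rightarrow> ('v, 'a) symalg" assume f: "f \<in> dirsum (length (t # rs))"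
    define g where "g \<sigma> = (if \<sigma> \<in> I then (f \<sigma> + f (\<sigma> @ [l])) * P else 0)" for \<sigma>
    define g' where "g' \<sigma> = (if \<sigma> \<in> I then (f \<sigma> - f (\<sigma> @ [l])) * (\<Prod>\<tau>\<in>I - {\<sigma>}. a \<tau>) else 0)" for \<sigma>
    have "g \<in> dirsum (length rs)" "g' \<in> dirsum (length rs)"
      by (auto simp: dirsum_def g_def g'_def I_def)
    then obtain u1 u2 where u: "u1 \<in> denoms R B" "u2 \<in> denoms R B"
      and x1: "(\<lambda>\<sigma>. u1 * g \<sigma>) \<in> Xrev B \<gamma> rs" and x2: "(\<lambda>\<sigma>. u2 * g' \<sigma>) \<in> Xrev B \<gamma> rs"
      using bspec[OF IH] by metis
    define z where "z \<sigma> = u2 * (u1 * g \<sigma>)" for \<sigma>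
    define z' where "z' \<sigma> = u1 * (u2 * g' \<sigma>)" for \<sigma>
    have zX: "z \<in> Xrev B \<gamma> rs" "z' \<in> Xrev B \<gamma> rs"
      using Xrev_scale[OF x1, of u2] Xrev_scale[OF x2, of u1]
      by (simp_all add: z_def[abs_def] z'_def[abs_def])
    define m where "m \<sigma> = Delta l z \<sigma> + cmul B \<gamma> s (lab_root \<gamma> t) (Delta l z') \<sigma>" for \<sigma>
    have ls: "l = length (rev (t # rs))" "s = rev (t # rs)" by (simp_all add: l_def s_def)
    have "m \<in> {(\<lambda>\<sigma>. Delta (length (rev (t # rs))) z \<sigma>
        + cmul B \<gamma> (rev (t # rs)) (lab_root \<gamma> t) (Delta (length (rev (t # rs))) z') \<sigma>) | z z'.
          z \<in> Xrev B \<gamma> rs \<and> z' \<in> Xrev B \<gamma> rs}"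
      using zX unfolding m_def[abs_def] ls by blast
    then have mX: "m \<in> Xrev B \<gamma> (t # rs)"
      by (simp only: Xrev.simps Let_def)
    define U where "U = u1 * u2 * (2 * P)"
    have UU: "U \<in> denoms R B"
      unfolding U_def by (intro denoms_mult u denoms.two PU)
    have fz: "f \<sigma> = 0" if "\<sigma> \<notin> Iset l" for \<sigma>
      using f that by (simp add: dirsum_def l_def)
    have "m = (\<lambda>\<sigma>. U * f \<sigma>)"
    proof
      fix \<sigma>
      show "m \<sigma> = U * f \<sigma>"
      proof (cases "\<sigma> \<in> Iset l")
        case False
        then show ?thesis by (simp add: m_def Delta_def cmul_def fz)
      next
        case True
        then consider "\<sigma> \<in> I" | \<tau> where "\<tau> \<in> I" "\<sigma> = \<tau> @ [l]"
          using Iset_Suc_cases unfolding l_def I_def by blast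
        then show ?thesis
        proof cases
          case 1
          have "\<not> (\<sigma> \<noteq> [] \<and> last \<sigma> = l)" using Iset_not_last 1 by (simp add: I_def l_def)
          then have nl: "(\<sigma> \<noteq> [] \<and> last \<sigma> = l) = False" by simp
          have "m \<sigma> = z \<sigma> + a \<sigma> * z' \<sigma>"
            using True unfolding m_def Delta_def cmul_def a_def nl by simp
          also have "\<dots> = U * f \<sigma>"
          proof -
            have e: "z \<sigma> = u2 * (u1 * ((f \<sigma> + f (\<sigma> @ [l])) * P))"
              "z' \<sigma> = u1 * (u2 * ((f \<sigma> - f (\<sigma> @ [l])) * (\<Prod>\<tau>\<in>I - {\<sigma>}. a \<tau>)))"
              by (simp_all add: z_def z'_def g_def g'_def 1)
            show ?thesis unfolding e U_def Prem[OF 1] by (rule alg1)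
          qed
          finally show ?thesis .
        next
          case 2
          have "m \<sigma> = z \<tau> + (- a \<tau>) * z' \<tau>"
            using True 2 aneg[OF 2(1)] by (simp add: m_def Delta_def cmul_def)
          also have "\<dots> = U * f \<sigma>"
          proof -
            have e: "z \<tau> = u2 * (u1 * ((f \<tau> + f \<sigma>) * P))"
              "z' \<tau> = u1 * (u2 * ((f \<tau> - f \<sigma>) * (\<Prod>\<tau>'\<in>I - {\<tau>}. a \<tau>')))"
              by (simp_all add: z_def z'_def g_def g'_def 2)
            show ?thesis unfolding e U_def Prem[OF 2(1)] by (rule alg2)
          qed
          finally show ?thesis .
        qed
      qed
    qed
    with mX UU show "\<exists>u\<in>denoms R B. (\<lambda>\<sigma>. u * f \<sigma>) \<in> Xrev B \<gamma> (t # rs)" by blast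
  qed
qed

theorem lemma6p3:
  fixes R B :: "'v::euclidean_space set" and \<gamma> :: 'v
    and s :: "'v option list"
  assumes "root_system R" and "reduced_rs R" and "irreducible_rs R"
    and "is_base R B" and "highest_root R B \<gamma>"
    and "\<forall>x::'a::idom. 2 * x = 0 \<longrightarrow> x = 0"
    and "\<forall>a\<in>affine_roots R. (lin B a :: ('v, 'a) symalg) \<noteq> 0"
    and "set s \<subseteq> simple_labels B"
  shows "loc_iso (denoms R B :: ('v, 'a) symalg set) (Xmod B \<gamma> s) (dirsum (length s))"
proof -
  have BR: "B \<subseteq> R" using assms(4) by (simp add: is_base_def)
  have gR: "\<gamma> \<in> R" using assms(5) by (simp add: highest_root_def)
  have M: "\<forall>f \<in> dirsum (length (rev s)). \<exists>u \<in> (denoms R B :: ('v, 'a) symalg set).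
       (\<lambda>\<sigma>. u * f \<sigma>) \<in> Xrev B \<gamma> (rev s)"
    proof -
    have "set (rev s) \<subseteq> simple_labels B" using assms(8) by simp
    then show ?thesis by (rule main[OF assms(1) BR gR])
  qed
  show ?thesis
    unfolding loc_iso_def
  proof (intro conjI ballI)
    show "Xmod B \<gamma> s \<subseteq> dirsum (length s)"
      using Xrev_sub[of B \<gamma> "rev s"] by (simp add: Xmod_def)
  next
    fix f :: "nat list \<Rightarrow> ('v, 'a) symalg" and v assume f: "f \<in> dirsum (length s)" and v: "v \<in> (denoms R B :: ('v, 'a) symalg set)"
    from M f obtain u where u: "u \<in> denoms R B" and x: "(\<lambda>\<sigma>. u * f \<sigma>) \<in> Xmod B \<gamma> s"
      by (auto simp: Xmod_def)
    show "\<exists>m\<in>Xmod B \<gamma> s. \<exists>u\<in>denoms R B. \<exists>t\<in>denoms R B. \<forall>\<sigma>. t * (v * m \<sigma> - u * f \<sigma>) = 0"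
      using x denoms_mult[OF v u] denoms.one
      by (intro bexI[OF _ x] bexI[of _ "v * u"] bexI[of _ 1]) (auto simp: algebra_simps)
  qed
qed

end
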